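(* Let $(A,\succ_A,\prec_A)$ be an anti-pre-Leibniz algebra with sub-adjacent Leibniz algebra $(A,\circ_A)$. If $(l_\succ,r_\succ,l_\prec,r_\prec,V)$ is a representation of $(A,\succ_A,\prec_A)$, then, with $l_\circ=l_\succ+l_\prec$ and $r_\circ=r_\succ+r_\prec$, $$\big(-l_\circ^*,\;-l_\prec^*-r_\succ^*,\;l_\prec^*,\;l_\circ^*+r_\circ^*,\;V^*\big)$$ is also a representation of $(A,\succ_A,\prec_A)$. In particular, $(-\mathcal L^*_{\circ_A},-\mathcal L^*_{\prec_A}-\mathcal R^*_{\succ_A},\mathcal L^*_{\prec_A},\mathcal L^*_{\circ_A}+\mathcal R^*_{\circ_A},A^* )$ is a representation of $(A,\succ_A,\prec_A)$.
   Context: All vector spaces are finite-dimensional over a field $\mathbb K$ of characteristic zero. For a multiplication $\ast$, $\mathcal L_\ast(x)y=x\ast y$, $\mathcal R_\ast(x)y=y\ast x$; for $f:A\to\mathrm{End}(V)$, $f^*:A\to\mathrm{End}(V^* )$ is $\langle f^*(x)u^*,v\rangle=-\langle u^*,f(x)v\rangle$. An anti-pre-Leibniz algebra is a vector space $A$ with multiplications $\succ_A,\prec_A$ such that, with $x\circ_A y=x\succ_A y+x\prec_A y$, for all $x,y,z$: (AL1) $(x\circ_A y)\prec_A z=x\succ_A(y\circ_A z)-y\succ_A(x\circ_A z)$; (AL2) $(x\circ_A y)\succ_A z=y\succ_A(x\succ_A z)-x\succ_A(y\succ_A z)$; (AL3) $x\prec_A(y\circ_A z)=(y\succ_A x)\prec_A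 z-y\succ_A(x\prec_A z)$; (AL4) $(x\succ_A y)\prec_A z=-(y\prec_A x)\prec_A z$. Its sub-adjacent Leibniz algebra is $(A,\circ_A)$. A representation of an anti-pre-Leibniz algebra $(A,\succ_A,\prec_A)$ is a tuple $(l_\succ,r_\succ,l_\prec,r_\prec,V)$ of linear maps $A\to\mathrm{End}(V)$ such that, writing $l_\circ=l_\succ+l_\prec$, $r_\circ=r_\succ+r_\prec$, for all $x,y\in A$ (as operators on $V$): (R1) $r_\prec(x)r_\circ(y)=r_\succ(y\circ_A x)-l_\succ(y)r_\circ(x)$; (R2) $r_\succ(x)r_\circ(y)=l_\succ(y)r_\succ(x)-r_\succ(y\succ_A x)$; (R3) $r_\prec(x\circ_A y)=r_\prec(y)l_\succ(x)-l_\succ(x)r_\prec(y)$; (R4) $r_\prec(x)r_\succ(y)=-r_\prec(x)l_\prec(y)$; (R5) $r_\succ(x)l_\circ(y)=r_\succ(y\succ_A x)-l_\succ(y)r_\succ(x)$; (R6) $l_\prec(x)r_\circ(y)=r_\prec(y)r_\succ(x)-r_\succ(x\prec_A y)$; (R7) $r_\prec(x)l_\succ(y)=-r_\prec(x)r_\prec(y)$; (R8) $l_\prec(x\circ_A y)=l_\succ(x)l_\circ(y)-l_\succ(y)l_\circ(x)$; (R9) $l_\succ(x\circ_A y)=l_\succ(y)l_\succ(x)-l_\succ(x)l_\succ(y)$; (R10) $l_\prec(x)l_\circ(y)=l_\prec(y\succ_A x)-l_\succ(y)l_\prec(x)$; (R11) $l_\prec(x\succ_A y)=-l_\prec(y\prec_A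 x)$. *)

theory Defs
  imports Complex_Main "HOL-Library.Function_Algebras"
begin

definition fd_vector_space :: "('k::field \<Rightarrow> 'v::ab_group_add \<Rightarrow> 'v) \<Rightarrow> bool" where
  "fd_vector_space s \<longleftrightarrow> (\<exists>B. Vector_Spaces.finite_dimensional_vector_space s B)"

definition bilinear_mult :: "('k::field \<Rightarrow> 'a::ab_group_add \<Rightarrow> 'a) \<Rightarrow> ('a \<Rightarrow> 'a \<Rightarrow> 'a) \<Rightarrow> bool" where
  "bilinear_mult s m \<longleftrightarrow> (\<forall>x. Vector_Spaces.linear s s (m x)) \<and> (\<forall>y. Vector_Spaces.linear s s (\<lambda>x. m x y))"

definition anti_pre_leibniz ::
  "('k::field \<Rightarrow> 'a::ab_group_add \<Rightarrow> 'a) \<Rightarrow> ('a \<Rightarrow> 'a \<Rightarrow> 'a) \<Rightarrow> ('a \<Rightarrow> 'a \<Rightarrow> 'a) \<Rightarrow> bool" where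
  "anti_pre_leibniz s sc pc \<longleftrightarrow>
     vector_space s \<and> bilinear_mult s sc \<and> bilinear_mult s pc \<and>
     (\<forall>x y z.
        pc (sc x y + pc x y) z = sc x (sc y z + pc y z) - sc y (sc x z + pc x z) \<and>
        sc (sc x y + pc x y) z = sc y (sc x z) - sc x (sc y z) \<and>
        pc x (sc y z + pc y z) = pc (sc y x) z - sc y (pc x z) \<and>
        pc (sc x y) z = - pc (pc y x) z)"

definition op_add :: "('a \<Rightarrow> 'w::ab_group_add \<Rightarrow> 'w) \<Rightarrow> ('a \<Rightarrow> 'w \<Rightarrow> 'w) \<Rightarrow> 'a \<Rightarrow> 'w \<Rightarrow> 'w" where
  "op_add f g = (\<lambda>x w. f x w + g x w)"

definition op_neg :: "('a \<Rightarrow> 'w::ab_group_add \<Rightarrow> 'w) \<Rightarrow> 'a \<Rightarrow> 'w \<Rightarrow> 'w" where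
  "op_neg f = (\<lambda>x w. - f x w)"

definition dual_space :: "('k::field \<Rightarrow> 'v::ab_group_add \<Rightarrow> 'v) \<Rightarrow> ('v \<Rightarrow> 'k) set" where
  "dual_space s = {u. Vector_Spaces.linear s (*) u}"

definition dual_scale :: "'k::field \<Rightarrow> ('v \<Rightarrow> 'k) \<Rightarrow> ('v \<Rightarrow> 'k)" where
  "dual_scale c u = (\<lambda>v. c * u v)"

definition dual_op :: "('a \<Rightarrow> 'v \<Rightarrow> 'v) \<Rightarrow> 'a \<Rightarrow> ('v \<Rightarrow> 'k::field) \<Rightarrow> ('v \<Rightarrow> 'k)" where
  "dual_op f = (\<lambda>x u. \<lambda>v. - u (f x v))"

definition lin_op_map ::
  "('k::field \<Rightarrow> 'a::ab_group_add \<Rightarrow> 'a) \<Rightarrow> ('k \<Rightarrow> 'w::ab_group_add \<Rightarrow> 'w) \<Rightarrow> 'w set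
   \<Rightarrow> ('a \<Rightarrow> 'w \<Rightarrow> 'w) \<Rightarrow> bool" where
  "lin_op_map sA sW W f \<longleftrightarrow>
     (\<forall>x. \<forall>w\<in>W. f x w \<in> W) \<and>
     (\<forall>x. \<forall>w\<in>W. \<forall>w'\<in>W. f x (w + w') = f x w + f x w') \<and>
     (\<forall>x c. \<forall>w\<in>W. f x (sW c w) = sW c (f x w)) \<and>
     (\<forall>x y. \<forall>w\<in>W. f (x + y) w = f x w + f y w) \<and>
     (\<forall>x c. \<forall>w\<in>W. f (sA c x) w = sW c (f x w))"

definition is_rep ::
  "('k::field \<Rightarrow> 'a::ab_group_add \<Rightarrow> 'a) \<Rightarrow> ('a \<Rightarrow> 'a \<Rightarrow> 'a) \<Rightarrow> ('a \<Rightarrow> 'a \<Rightarrow> 'a)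
   \<Rightarrow> ('k \<Rightarrow> 'w::ab_group_add \<Rightarrow> 'w) \<Rightarrow> 'w set
   \<Rightarrow> ('a \<Rightarrow> 'w \<Rightarrow> 'w) \<Rightarrow> ('a \<Rightarrow> 'w \<Rightarrow> 'w) \<Rightarrow> ('a \<Rightarrow> 'w \<Rightarrow> 'w) \<Rightarrow> ('a \<Rightarrow> 'w \<Rightarrow> 'w) \<Rightarrow> bool" where
  "is_rep sA sc pc sW W ls rs lp rp \<longleftrightarrow>
     vector_space sW \<and> module.subspace sW W \<and>
     lin_op_map sA sW W ls \<and> lin_op_map sA sW W rs \<and>
     lin_op_map sA sW W lp \<and> lin_op_map sA sW W rp \<and>
     (let lo = op_add ls lp; ro = op_add rs rp; co = (\<lambda>x y. sc x y + pc x y) in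
      \<forall>x y. \<forall>v\<in>W.
        rp x (ro y v) = rs (co y x) v - ls y (ro x v) \<and>
        rs x (ro y v) = ls y (rs x v) - rs (sc y x) v \<and>
        rp (co x y) v = rp y (ls x v) - ls x (rp y v) \<and>
        rp x (rs y v) = - rp x (lp y v) \<and>
        rs x (lo y v) = rs (sc y x) v - ls y (rs x v) \<and>
        lp x (ro y v) = rp y (rs x v) - rs (pc x y) v \<and>
        rp x (ls y v) = - rp x (rp y v) \<and>
        lp (co x y) v = ls x (lo y v) - ls y (lo x v) \<and>
        ls (co x y) v = ls y (ls x v) - ls x (ls y v) \<and>
        lp x (lo y v) = lp (sc y x) v - ls y (lp x v) \<and>
        lp (sc x y) v = - lp (pc y x) v)"

end

theory Submission
  imports Defs
begin

lemma lom_facts: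
  assumes "lin_op_map sA sV UNIV f"
  shows "f x (a+b) = f x a + f x b" "f x (-a) = - f x a" "f x (a-b) = f x a - f x b"
        "f (y+z) w = f y w + f z w"
proof -
  have ad: "additive (f x)" using assms unfolding lin_op_map_def additive_def by auto
  show "f x (a+b) = f x a + f x b" using assms unfolding lin_op_map_def by auto
  show "f x (-a) = - f x a" using additive.minus[OF ad] .
  show "f x (a-b) = f x a - f x b" using additive.diff[OF ad] .
  show "f (y+z) w = f y w + f z w" using assms unfolding lin_op_map_def by auto
qed

lemma vs_mult: "vector_space ((*) :: 'k::field \<Rightarrow> 'k \<Rightarrow> 'k)"
  unfolding vector_space_def by (auto simp: algebra_simps)

lemma vs_dual: "vector_space (dual_scale :: 'k::field \<Rightarrow> ('v \<Rightarrow> 'k) \<Rightarrow> _)"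
  unfolding vector_space_def dual_scale_def by (auto simp: algebra_simps fun_eq_iff)

lemma dual_space_iff:
  assumes "vector_space sV"
  shows "u \<in> dual_space sV \<longleftrightarrow> (\<forall>a b. u (a+b) = u a + u b) \<and> (\<forall>c a. u (sV c a) = c * u a)"
  using assms vs_mult unfolding dual_space_def Vector_Spaces.linear_iff by auto

lemma dual_facts:
  assumes "vector_space sV" "u \<in> dual_space sV"
  shows "u (a+b) = u a + u b" "u (-a) = - u a" "u (a-b) = u a - u b" "u (sV c a) = c * u a"
proof -
  have ad: "additive u" using assms dual_space_iff unfolding additive_def by auto
  show "u (a+b) = u a + u b" using additive.add[OF ad] .
  show "u (-a) = - u a" using additive.minus[OF ad] .
  show "u (a-b) = u a - u b" using additive.diff[OF ad] .
  show "u (sV c a) = c * u a" using assms(2) dual_space_iff[OF assms(1)] by auto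
qed

lemma subspace_dual:
  assumes "vector_space sV"
  shows "module.subspace dual_scale (dual_space sV)"
  using vs_dual[unfolded module_iff_vector_space[symmetric]]
  unfolding module.subspace_def[OF vs_dual[unfolded module_iff_vector_space[symmetric]]]
  using assms by (auto simp: dual_space_iff dual_scale_def algebra_simps)

lemma lin_dual:
  assumes "vector_space sV" "lin_op_map sA sV UNIV f"
  shows "lin_op_map sA dual_scale (dual_space sV) (dual_op f)"
proof -
  note L = lom_facts[OF assms(2)]
  note lf = assms(2)[unfolded lin_op_map_def]
  show ?thesis unfolding lin_op_map_def
  proof (intro conjI allI ballI)
    fix x w assume w: "w \<in> dual_space sV"
    note D = dual_facts[OF assms(1) w]
    show "dual_op f x w \<in> dual_space sV"
      using assms(1) lf by (auto simp: dual_space_iff dual_op_def D L)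
  next
    fix x w w' assume "w \<in> dual_space sV" "w' \<in> dual_space sV"
    show "dual_op f x (w + w') = dual_op f x w + dual_op f x w'"
      by (auto simp: dual_op_def fun_eq_iff)
  next
    fix x c w assume "w \<in> dual_space sV"
    show "dual_op f x (dual_scale c w) = dual_scale c (dual_op f x w)"
      by (auto simp: dual_op_def dual_scale_def fun_eq_iff)
  next
    fix x y w assume w: "w \<in> dual_space sV"
    note D = dual_facts[OF assms(1) w]
    show "dual_op f (x + y) w = dual_op f x w + dual_op f y w"
      by (auto simp: dual_op_def fun_eq_iff D L)
  next
    fix x c w assume w: "w \<in> dual_space sV"
    note D = dual_facts[OF assms(1) w]
    show "dual_op f (sA c x) w = dual_scale c (dual_op f x w)"
      using lf by (auto simp: dual_op_def dual_scale_def fun_eq_iff D)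
  qed
qed

lemma lin_add:
  assumes "vector_space sW" "module.subspace sW W" "lin_op_map sA sW W f" "lin_op_map sA sW W g"
  shows "lin_op_map sA sW W (op_add f g)"
proof -
  have m: "module sW" using assms(1) module_iff_vector_space by auto
  show ?thesis using assms(3,4) module.subspace_add[OF m assms(2)] module.scale_right_distrib[OF m]
    unfolding lin_op_map_def op_add_def by (auto simp: algebra_simps)
qed

lemma lin_neg:
  assumes "vector_space sW" "module.subspace sW W" "lin_op_map sA sW W f"
  shows "lin_op_map sA sW W (op_neg f)"
proof -
  have m: "module sW" using assms(1) module_iff_vector_space by auto
  show ?thesis using assms(3) module.subspace_neg[OF m assms(2)] module.scale_minus_right[OF m]
    unfolding lin_op_map_def op_neg_def by (auto simp: algebra_simps)
qed

lemma conj_map: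
  assumes "A1 = B1 \<and> A2 = B2 \<and> A3 = B3 \<and> A4 = B4 \<and> A5 = B5 \<and> A6 = B6 \<and> A7 = B7 \<and> A8 = B8 \<and> A9 = B9 \<and> A10 = B10 \<and> A11 = B11"
  shows "u A1 = u B1" "u A2 = u B2" "u A3 = u B3" "u A4 = u B4" "u A5 = u B5" "u A6 = u B6"
    "u A7 = u B7" "u A8 = u B8" "u A9 = u B9" "u A10 = u B10" "u A11 = u B11"
  using assms by simp_all

lemma dual_rep:
  assumes rep: "is_rep sA sc pc sV UNIV ls rs lp rp"
  shows "is_rep sA sc pc dual_scale (dual_space sV)
           (op_neg (dual_op (op_add ls lp)))
           (op_add (op_neg (dual_op lp)) (op_neg (dual_op rs)))
           (dual_op lp)
           (op_add (dual_op (op_add ls lp)) (dual_op (op_add rs rp)))"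
proof -
  have vs: "vector_space sV" and ls: "lin_op_map sA sV UNIV ls" and rs: "lin_op_map sA sV UNIV rs"
    and lp: "lin_op_map sA sV UNIV lp" and rp: "lin_op_map sA sV UNIV rp"
    using rep unfolding is_rep_def by auto
  note E = rep[unfolded is_rep_def Let_def, THEN conjunct2, THEN conjunct2, THEN conjunct2,
     THEN conjunct2, THEN conjunct2, THEN conjunct2]
  note Lls = lom_facts[OF ls] and Lrs = lom_facts[OF rs] and Llp = lom_facts[OF lp] and Lrp = lom_facts[OF rp]
  have sd: "module.subspace dual_scale (dual_space sV)" by (rule subspace_dual[OF vs])
  note vd = vs_dual
  have su: "module.subspace sV UNIV" using rep unfolding is_rep_def by auto
  have l1: "lin_op_map sA dual_scale (dual_space sV) (op_neg (dual_op (op_add ls lp)))"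
    by (rule lin_neg[OF vd sd], rule lin_dual[OF vs], rule lin_add[OF vs su ls lp])
  have l2: "lin_op_map sA dual_scale (dual_space sV) (op_add (op_neg (dual_op lp)) (op_neg (dual_op rs)))"
    by (rule lin_add[OF vd sd], rule lin_neg[OF vd sd], rule lin_dual[OF vs lp],
        rule lin_neg[OF vd sd], rule lin_dual[OF vs rs])
  have l3: "lin_op_map sA dual_scale (dual_space sV) (dual_op lp)"
    by (rule lin_dual[OF vs lp])
  have l4: "lin_op_map sA dual_scale (dual_space sV) (op_add (dual_op (op_add ls lp)) (dual_op (op_add rs rp)))"
    by (rule lin_add[OF vd sd], rule lin_dual[OF vs], rule lin_add[OF vs su ls lp],
        rule lin_dual[OF vs], rule lin_add[OF vs su rs rp])
  show ?thesis
    unfolding is_rep_def Let_def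
    apply (intro conjI vd sd l1 l2 l3 l4)
    apply (intro allI ballI)
    apply (simp only: fun_eq_iff)
    apply (intro conjI allI)
  subgoal premises p for x y u v
    using conj_map[OF E[THEN spec[where x=x], THEN spec[where x=y], THEN bspec[where x=v], OF UNIV_I], of u] conj_map[OF E[THEN spec[where x=y], THEN spec[where x=x], THEN bspec[where x=v], OF UNIV_I], of u]
    by (simp add: op_add_def op_neg_def dual_op_def dual_facts[OF vs p] Lls Lrs Llp Lrp; algebra?)
  subgoal premises p for x y u v
    using conj_map[OF E[THEN spec[where x=x], THEN spec[where x=y], THEN bspec[where x=v], OF UNIV_I], of u] conj_map[OF E[THEN spec[where x=y], THEN spec[where x=x], THEN bspec[where x=v], OF UNIV_I], of u]
    by (simp add: op_add_def op_neg_def dual_op_def dual_facts[OF vs p] Lls Lrs Llp Lrp; algebra?)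
  subgoal premises p for x y u v
    using conj_map[OF E[THEN spec[where x=x], THEN spec[where x=y], THEN bspec[where x=v], OF UNIV_I], of u] conj_map[OF E[THEN spec[where x=y], THEN spec[where x=x], THEN bspec[where x=v], OF UNIV_I], of u]
    by (simp add: op_add_def op_neg_def dual_op_def dual_facts[OF vs p] Lls Lrs Llp Lrp; algebra?)
  subgoal premises p for x y u v
    using conj_map[OF E[THEN spec[where x=x], THEN spec[where x=y], THEN bspec[where x=v], OF UNIV_I], of u] conj_map[OF E[THEN spec[where x=y], THEN spec[where x=x], THEN bspec[where x=v], OF UNIV_I], of u]
    by (simp add: op_add_def op_neg_def dual_op_def dual_facts[OF vs p] Lls Lrs Llp Lrp; algebra?)
  subgoal premises p for x y u v
    using conj_map[OF E[THEN spec[where x=x], THEN spec[where x=y], THEN bspec[where x=v], OF UNIV_I], of u] conj_map[OF E[THEN spec[where x=y], THEN spec[where x=x], THEN bspec[where x=v], OF UNIV_I], of u]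
    by (simp add: op_add_def op_neg_def dual_op_def dual_facts[OF vs p] Lls Lrs Llp Lrp; algebra?)
  subgoal premises p for x y u v
    using conj_map[OF E[THEN spec[where x=x], THEN spec[where x=y], THEN bspec[where x=v], OF UNIV_I], of u] conj_map[OF E[THEN spec[where x=y], THEN spec[where x=x], THEN bspec[where x=v], OF UNIV_I], of u]
    by (simp add: op_add_def op_neg_def dual_op_def dual_facts[OF vs p] Lls Lrs Llp Lrp; algebra?)
  subgoal premises p for x y u v
    using conj_map[OF E[THEN spec[where x=x], THEN spec[where x=y], THEN bspec[where x=v], OF UNIV_I], of u] conj_map[OF E[THEN spec[where x=y], THEN spec[where x=x], THEN bspec[where x=v], OF UNIV_I], of u]
    by (simp add: op_add_def op_neg_def dual_op_def dual_facts[OF vs p] Lls Lrs Llp Lrp; algebra?)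
  subgoal premises p for x y u v
    using conj_map[OF E[THEN spec[where x=x], THEN spec[where x=y], THEN bspec[where x=v], OF UNIV_I], of u] conj_map[OF E[THEN spec[where x=y], THEN spec[where x=x], THEN bspec[where x=v], OF UNIV_I], of u]
    by (simp add: op_add_def op_neg_def dual_op_def dual_facts[OF vs p] Lls Lrs Llp Lrp; algebra?)
  subgoal premises p for x y u v
    using conj_map[OF E[THEN spec[where x=x], THEN spec[where x=y], THEN bspec[where x=v], OF UNIV_I], of u] conj_map[OF E[THEN spec[where x=y], THEN spec[where x=x], THEN bspec[where x=v], OF UNIV_I], of u]
    by (simp add: op_add_def op_neg_def dual_op_def dual_facts[OF vs p] Lls Lrs Llp Lrp; algebra?)
  subgoal premises p for x y u v
    using conj_map[OF E[THEN spec[where x=x], THEN spec[where x=y], THEN bspec[where x=v], OF UNIV_I], of u] conj_map[OF E[THEN spec[where x=y], THEN spec[where x=x], THEN bspec[where x=v], OF UNIV_I], of u]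
    by (simp add: op_add_def op_neg_def dual_op_def dual_facts[OF vs p] Lls Lrs Llp Lrp; algebra?)
  subgoal premises p for x y u v
    using conj_map[OF E[THEN spec[where x=x], THEN spec[where x=y], THEN bspec[where x=v], OF UNIV_I], of u] conj_map[OF E[THEN spec[where x=y], THEN spec[where x=x], THEN bspec[where x=v], OF UNIV_I], of u]
    by (simp add: op_add_def op_neg_def dual_op_def dual_facts[OF vs p] Lls Lrs Llp Lrp; algebra?)
    done
qed


lemma reg_rep:
  assumes apl: "anti_pre_leibniz sA sc pc"
  shows "is_rep sA sc pc sA UNIV (\<lambda>x y. sc x y) (\<lambda>x y. sc y x) pc (\<lambda>x y. pc y x)"
proof -
  have vs: "vector_space sA" and bs: "bilinear_mult sA sc" and bp: "bilinear_mult sA pc"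
    and AL: "\<forall>x y z.
        pc (sc x y + pc x y) z = sc x (sc y z + pc y z) - sc y (sc x z + pc x z) \<and>
        sc (sc x y + pc x y) z = sc y (sc x z) - sc x (sc y z) \<and>
        pc x (sc y z + pc y z) = pc (sc y x) z - sc y (pc x z) \<and>
        pc (sc x y) z = - pc (pc y x) z"
    using apl unfolding anti_pre_leibniz_def by auto
  have m: "module sA" using vs module_iff_vector_space by auto
  have su: "module.subspace sA UNIV" using module.subspace_UNIV[OF m] .
  have l1: "lin_op_map sA sA UNIV (\<lambda>x y. sc x y)" and l2: "lin_op_map sA sA UNIV (\<lambda>x y. sc y x)"
    and l3: "lin_op_map sA sA UNIV pc" and l4: "lin_op_map sA sA UNIV (\<lambda>x y. pc y x)"
    using bs bp unfolding bilinear_mult_def lin_op_map_def Vector_Spaces.linear_iff by auto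
  have AL1: "\<And>x y z. pc (sc x y + pc x y) z = sc x (sc y z + pc y z) - sc y (sc x z + pc x z)"
    and AL2: "\<And>x y z. sc (sc x y + pc x y) z = sc y (sc x z) - sc x (sc y z)"
    and AL3: "\<And>x y z. pc x (sc y z + pc y z) = pc (sc y x) z - sc y (pc x z)"
    and AL4: "\<And>x y z. pc (sc x y) z = - pc (pc y x) z"
    using AL by auto
  show ?thesis
    unfolding is_rep_def Let_def op_add_def
    apply (intro conjI vs su l1 l2 l3 l4 allI ballI)
    apply (simp_all add: AL1 AL2 AL3 AL4)
    done
qed

theorem proposition2p20:
  fixes sA :: "'k::field_char_0 \<Rightarrow> 'a::ab_group_add \<Rightarrow> 'a"
    and sc pc :: "'a \<Rightarrow> 'a \<Rightarrow> 'a"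
    and sV :: "'k \<Rightarrow> 'v::ab_group_add \<Rightarrow> 'v"
    and ls rs lp rp :: "'a \<Rightarrow> 'v \<Rightarrow> 'v"
  assumes "fd_vector_space sA"
    and "fd_vector_space sV"
    and "anti_pre_leibniz sA sc pc"
    and "is_rep sA sc pc sV UNIV ls rs lp rp"
  shows "is_rep sA sc pc dual_scale (dual_space sV)
           (op_neg (dual_op (op_add ls lp)))
           (op_add (op_neg (dual_op lp)) (op_neg (dual_op rs)))
           (dual_op lp)
           (op_add (dual_op (op_add ls lp)) (dual_op (op_add rs rp)))
       \<and> is_rep sA sc pc dual_scale (dual_space sA)
           (op_neg (dual_op (\<lambda>x y. sc x y + pc x y)))
           (op_add (op_neg (dual_op pc)) (op_neg (dual_op (\<lambda>x y. sc y x))))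
           (dual_op pc)
           (op_add (dual_op (\<lambda>x y. sc x y + pc x y)) (dual_op (\<lambda>x y. sc y x + pc y x)))"
proof
  show "is_rep sA sc pc dual_scale (dual_space sV)
           (op_neg (dual_op (op_add ls lp)))
           (op_add (op_neg (dual_op lp)) (op_neg (dual_op rs)))
           (dual_op lp)
           (op_add (dual_op (op_add ls lp)) (dual_op (op_add rs rp)))"
    by (rule dual_rep[OF assms(4)])
next
  have "op_add (\<lambda>x y. sc x y) pc = (\<lambda>x y. sc x y + pc x y)"
    and "op_add (\<lambda>x y. sc y x) (\<lambda>x y. pc y x) = (\<lambda>x y. sc y x + pc y x)"
    by (simp_all add: op_add_def)
  with dual_rep[OF reg_rep[OF assms(3)]]
  show "is_rep sA sc pc dual_scale (dual_space sA)
           (op_neg (dual_op (\<lambda>x y. sc x y + pc x y)))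
           (op_add (op_neg (dual_op pc)) (op_neg (dual_op (\<lambda>x y. sc y x))))
           (dual_op pc)
           (op_add (dual_op (\<lambda>x y. sc x y + pc x y)) (dual_op (\<lambda>x y. sc y x + pc y x)))"
    by simp
qed

end
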